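(* Under the standing setup below, $D_{n-1} \ge F_n$ for all $n \in \mathbb{N}_0$, and consequently, as $n \to +\infty$, \[ a_{-n} u_n + a_{-n+1} u_{n+1} = \frac{\pi}{4} + O\!\left( \Phi^{-2n} \right), \] where $\Phi = \frac{1+\sqrt5}{2}$; i.e. the rational sequence $(a_{-n}u_n + a_{-n+1}u_{n+1})_n$ converges to $\pi/4$ at least as fast as a geometric sequence of ratio $1/\Phi^2$.
   Context: Standing setup: $a_0, a_1 \in \mathbb{Z}$ and $u_0 > u_1 > 0$ are rational numbers with $a_0 \arctan u_0 + a_1 \arctan u_1 = \pi/4$. Let $\alpha := \arctan u_0 / \arctan u_1$ (which is $>1$ and irrational), with infinite simple continued fraction expansion $\alpha = [q_0; q_1, q_2, \dots]$, $q_i \in \mathbb{N}$. The numbers $u_n$ ($n \in \mathbb{N}_0$) are the positive reals with the given $u_0,u_1$ and $\arctan u_n = q_n \arctan u_{n+1} + \arctan u_{n+2}$ for all $n \in \mathbb{N}_0$. The integers $a_{-n}$ for $n \geq 1$ are defined recursively by $a_{-n-1} := q_n a_{-n} + a_{-n+1}$ for all $n \in \mathbb{N}_0$. The sequence $D_k$ ($k \ge -2$) is defined by $D_{-2}=1$, $D_{-1}=0$, $D_k = q_k D_{k-1} + D_{k-2}$ for $k \in \mathbb{N}_0$ (denominators of the convergents of $\alpha$). $(F_n)_{n\ge0}$ is the Fibonacci sequence $F_0=0$, $F_1=1$, $F_{n+2}=F_{n+1}+F_n$. *)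

theory Defs
  imports Complex_Main "HOL-Library.Landau_Symbols" "HOL-Number_Theory.Fib"
begin

fun cf_rem :: "real \<Rightarrow> nat \<Rightarrow> real" where
  "cf_rem x 0 = x"
| "cf_rem x (Suc n) = 1 / (cf_rem x n - of_int \<lfloor>cf_rem x n\<rfloor>)"

definition cf_q :: "real \<Rightarrow> nat \<Rightarrow> nat" where
  "cf_q x n = nat \<lfloor>cf_rem x n\<rfloor>"

definition alpha :: "real \<Rightarrow> real \<Rightarrow> real" where
  "alpha u0 u1 = arctan u0 / arctan u1"

text \<open>u_n: u_0, u_1 given, arctan u_n = q_n arctan u_(n+1) + arctan u_(n+2).\<close>
fun useq :: "real \<Rightarrow> real \<Rightarrow> nat \<Rightarrow> real" where
  "useq u0 u1 0 = u0"
| "useq u0 u1 (Suc 0) = u1"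
| "useq u0 u1 (Suc (Suc n)) =
     tan (arctan (useq u0 u1 n) - real (cf_q (alpha u0 u1) n) * arctan (useq u0 u1 (Suc n)))"

text \<open>aseq k = a_(1-k): aseq 0 = a_1, aseq 1 = a_0, and
  a_(-n-1) = q_n a_(-n) + a_(-n+1), i.e. aseq (n+2) = q_n aseq (n+1) + aseq n.
  Hence a_(-n) = aseq (n+1) and a_(-n+1) = aseq n.\<close>
fun aseq :: "int \<Rightarrow> int \<Rightarrow> real \<Rightarrow> real \<Rightarrow> nat \<Rightarrow> int" where
  "aseq a0 a1 u0 u1 0 = a1"
| "aseq a0 a1 u0 u1 (Suc 0) = a0"
| "aseq a0 a1 u0 u1 (Suc (Suc n)) =
     int (cf_q (alpha u0 u1) n) * aseq a0 a1 u0 u1 (Suc n) + aseq a0 a1 u0 u1 n"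

text \<open>Dseq x j = D_(j-2) for the continued fraction of x:
  D_(-2) = 1, D_(-1) = 0, D_k = q_k D_(k-1) + D_(k-2).\<close>
fun Dseq :: "real \<Rightarrow> nat \<Rightarrow> int" where
  "Dseq x 0 = 1"
| "Dseq x (Suc 0) = 0"
| "Dseq x (Suc (Suc k)) = int (cf_q x k) * Dseq x (Suc k) + Dseq x k"

end

theory Submission
  imports Defs
begin

lemma arctan_lb: assumes "0 \<le> u" shows "u / (1 + u^2) \<le> arctan u"
proof -
  have "(\<lambda>x. arctan x - x / (1 + x^2)) 0 \<le> (\<lambda>x. arctan x - x / (1 + x^2)) u"
  proof (rule DERIV_nonneg_imp_nondecreasing[OF assms])
    fix x :: real
    have p: "1 + x^2 > 0" by (smt (verit) zero_le_power2)
    have "((\<lambda>x. arctan x - x / (1 + x^2)) has_real_derivative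
       (inverse (1 + x^2) - ((1 * (1 + x^2) - x * (2 * x)) / ((1 + x^2) * (1 + x^2))))) (at x)"
      using p by (auto intro!: derivative_eq_intros)
    moreover have "inverse (1 + x^2) - ((1 * (1 + x^2) - x * (2 * x)) / ((1 + x^2) * (1 + x^2)))
       = 2 * x^2 / (1 + x^2)^2"
    proof -
      define t where "t = 1 + x^2"
      have t: "t > 0" using p t_def by simp
      have "inverse t - ((1 * t - x * (2 * x)) / (t * t)) = (t - (t - 2 * x^2)) / (t * t)"
        using t by (simp add: field_simps power2_eq_square)
      also have "\<dots> = 2 * x^2 / t^2" by (simp add: power2_eq_square)
      finally show ?thesis by (simp add: t_def)
    qed
    moreover have "2 * x^2 / (1 + x^2)^2 \<ge> 0" by simp
    ultimately show "\<exists>y. ((\<lambda>x. arctan x - x / (1 + x^2)) has_real_derivative y) (at x) \<and> 0 \<le> y"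
      by metis
  qed
  then show ?thesis by simp
qed

lemma arctan_ub3: assumes "0 \<le> u" shows "u - arctan u \<le> u^3 / 3"
proof -
  have "(\<lambda>x. x^3/3 - x + arctan x) 0 \<le> (\<lambda>x. x^3/3 - x + arctan x) u"
  proof (rule DERIV_nonneg_imp_nondecreasing[OF assms])
    fix x :: real
    have p: "1 + x^2 > 0" by (smt (verit) zero_le_power2)
    have "((\<lambda>x. x^3/3 - x + arctan x) has_real_derivative
       (3 * x^2 / 3 - 1 + inverse (1 + x^2))) (at x)"
      by (intro derivative_eq_intros DERIV_arctan refl) auto
    moreover have "3 * x^2 / 3 - 1 + inverse (1 + x^2) = x^4 / (1 + x^2)"
      using p by (simp add: field_simps power2_eq_square power4_eq_xxxx)
    moreover have "x^4 / (1 + x^2) \<ge> 0" using p by simp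
    ultimately show "\<exists>y. ((\<lambda>x. x^3/3 - x + arctan x) has_real_derivative y) (at x) \<and> 0 \<le> y"
      by metis
  qed
  then show ?thesis by simp
qed

lemma arctan_le_self: assumes "0 \<le> u" shows "arctan u \<le> u"
proof -
  have "(\<lambda>x. x - arctan x) 0 \<le> (\<lambda>x. x - arctan x) u"
  proof (rule DERIV_nonneg_imp_nondecreasing[OF assms])
    fix x :: real
    have p: "1 + x^2 > 0" by (smt (verit) zero_le_power2)
    have "((\<lambda>x. x - arctan x) has_real_derivative (1 - inverse (1 + x^2))) (at x)"
      by (auto intro!: derivative_eq_intros)
    moreover have "1 - inverse (1 + x^2) \<ge> 0" using p
      by (simp add: inverse_le_1_iff)
    ultimately show "\<exists>y. ((\<lambda>x. x - arctan x) has_real_derivative y) (at x) \<and> 0 \<le> y"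
      by metis
  qed
  then show ?thesis by simp
qed

lemma cf_rem_props:
  assumes "x \<notin> \<rat>" "x > 1"
  shows "cf_rem x n \<notin> \<rat> \<and> cf_rem x n > 1"
proof (induction n)
  case 0 then show ?case using assms by simp
next
  case (Suc n)
  define r where "r = cf_rem x n"
  define f where "f = r - of_int \<lfloor>r\<rfloor>"
  have rq: "r \<notin> \<rat>" using Suc r_def by simp
  have f0: "f \<ge> 0" "f < 1" unfolding f_def by linarith+
  have fq: "f \<notin> \<rat>"
  proof
    assume "f \<in> \<rat>"
    then have "f + of_int \<lfloor>r\<rfloor> \<in> \<rat>" by (intro Rats_add) auto
    then show False using rq f_def by simp
  qed
  have fnz: "f \<noteq> 0" using fq by auto
  have "1 / f \<notin> \<rat>"
  proof
    assume "1 / f \<in> \<rat>"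
    then have "inverse (1 / f) \<in> \<rat>" by (rule Rats_inverse)
    then show False using fq by simp
  qed
  moreover have "1 / f > 1" using f0 fnz by (simp add: less_divide_eq)
  ultimately show ?case by (simp add: r_def f_def)
qed

lemma cf_q_real:
  assumes "cf_rem x n > 1"
  shows "real (cf_q x n) = of_int \<lfloor>cf_rem x n\<rfloor>" "cf_q x n \<ge> 1"
proof -
  have h: "(1::int) \<le> \<lfloor>cf_rem x n\<rfloor>" using assms by (simp add: le_floor_iff)
  then show "real (cf_q x n) = of_int \<lfloor>cf_rem x n\<rfloor>"
    by (simp add: cf_q_def)
  have "nat 1 \<le> nat \<lfloor>cf_rem x n\<rfloor>" using h by (rule nat_mono)
  then show "cf_q x n \<ge> 1" by (simp add: cf_q_def)
qed

fun Eseq :: "real \<Rightarrow> nat \<Rightarrow> int" where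
  "Eseq x 0 = 0"
| "Eseq x (Suc 0) = 1"
| "Eseq x (Suc (Suc k)) = int (cf_q x k) * Eseq x (Suc k) + Eseq x k"

lemma fib_phi: "real (fib (n + 2)) \<ge> ((1 + sqrt 5) / 2) ^ n"
proof -
  define p where "p = (1 + sqrt 5) / 2"
  have pp: "p^2 = p + 1" unfolding p_def by (simp add: power2_eq_square field_simps)
  have p1: "p \<le> 2" unfolding p_def
  proof -
    have "sqrt 5 \<le> 3" by (rule real_le_lsqrt) auto
    then show "(1 + sqrt 5) / 2 \<le> 2" by simp
  qed
  have "real (fib (n + 2)) \<ge> p ^ n \<and> real (fib (n + 3)) \<ge> p ^ (n+1)"
  proof (induction n)
    case 0 then show ?case using p1 by (simp add: numeral_3_eq_3 numeral_2_eq_2)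
  next
    case (Suc n)
    have "fib (Suc n + 3) = fib (n + 3) + fib (n + 2)"
      using fib_plus_2[of "n+2"] by (simp add: numeral_3_eq_3 numeral_2_eq_2)
    then have "real (fib (Suc n + 3)) \<ge> p^(n+1) + p^n" using Suc by simp
    moreover have "p^(n+1) + p^n = p^(Suc n + 1)"
    proof -
      have "p^(Suc n + 1) = p^2 * p^n" by (simp add: power2_eq_square)
      also have "\<dots> = p^(n+1) + p^n" by (simp add: pp algebra_simps)
      finally show ?thesis by simp
    qed
    ultimately show ?case using Suc by (simp add: numeral_3_eq_3)
  qed
  then show ?thesis unfolding p_def by simp
qed


lemma alpha_gt1:
  assumes "u0 > u1" "u1 > (0::real)"
  shows "alpha u0 u1 > 1"
proof -
  have "arctan u0 > arctan u1" "arctan u1 > 0" using assms by (auto simp: arctan_less_iff)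
  then show ?thesis by (simp add: alpha_def)
qed

lemma theta_main:
  assumes "u0 > u1" "u1 > (0::real)" "alpha u0 u1 \<notin> \<rat>"
  shows "arctan (useq u0 u1 (Suc n)) > 0 \<and>
         arctan (useq u0 u1 n) = cf_rem (alpha u0 u1) n * arctan (useq u0 u1 (Suc n))"
proof (induction n)
  case 0
  have "arctan u1 > 0" using assms by simp
  then show ?case by (simp add: alpha_def)
next
  case (Suc n)
  define a where "a = alpha u0 u1"
  define t where "t = (\<lambda>k. arctan (useq u0 u1 k))"
  define r where "r = cf_rem a n"
  have a1: "a \<notin> \<rat>" "a > 1" using assms alpha_gt1 a_def by auto
  have r1: "r > 1" using cf_rem_props[OF a1] r_def by auto
  have qr: "real (cf_q a n) = of_int \<lfloor>r\<rfloor>" using cf_q_real[of a n] r1 r_def by auto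
  have IH: "t (Suc n) > 0" "t n = r * t (Suc n)" using Suc by (auto simp: t_def r_def a_def)
  define y where "y = t (Suc n) * (r - of_int \<lfloor>r\<rfloor>)"
  have f0: "r - of_int \<lfloor>r\<rfloor> > 0"
  proof -
    have "r \<notin> \<rat>" using cf_rem_props[OF a1] r_def by auto
    then have "r \<noteq> of_int \<lfloor>r\<rfloor>" using Rats_of_int by metis
    then show ?thesis by linarith
  qed
  have f1: "r - of_int \<lfloor>r\<rfloor> < 1" by linarith
  have y0: "y > 0" using IH f0 y_def by simp
  have y1: "y < t (Suc n)" using IH f1 y_def by simp
  have "t (Suc n) < pi / 2" using arctan_ubound t_def by simp
  have yeq: "t n - real (cf_q a n) * t (Suc n) = y" using IH qr y_def by (simp add: algebra_simps)
  have "t (Suc (Suc n)) = arctan (tan (t n - real (cf_q a n) * t (Suc n)))"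
    by (simp add: t_def a_def)
  also have "\<dots> = y" unfolding yeq
    by (rule arctan_tan) (use y0 y1 \<open>t (Suc n) < pi / 2\<close> in linarith)+
  finally have tt: "t (Suc (Suc n)) = y" .
  have "cf_rem a (Suc n) = 1 / (r - of_int \<lfloor>r\<rfloor>)" by (simp add: r_def)
  then have "cf_rem a (Suc n) * y = t (Suc n)" using f0 y_def by simp
  then show ?case using tt y0 by (simp add: t_def a_def)
qed


lemma theta_rec:
  assumes "u0 > u1" "u1 > (0::real)" "alpha u0 u1 \<notin> \<rat>"
  shows "arctan (useq u0 u1 (Suc (Suc n))) = arctan (useq u0 u1 n)
           - real (cf_q (alpha u0 u1) n) * arctan (useq u0 u1 (Suc n))"
proof -
  define a where "a = alpha u0 u1"
  define t where "t = (\<lambda>k. arctan (useq u0 u1 k))"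
  define r where "r = cf_rem a n"
  have a1: "a \<notin> \<rat>" "a > 1" using assms alpha_gt1 a_def by auto
  have r1: "r > 1" using cf_rem_props[OF a1] r_def by auto
  have qr: "real (cf_q a n) = of_int \<lfloor>r\<rfloor>" using cf_q_real[of a n] r1 r_def by auto
  have h0: "t n = r * t (Suc n)" using theta_main[OF assms, of n] by (simp add: t_def r_def a_def)
  have h1: "t (Suc n) = cf_rem a (Suc n) * t (Suc (Suc n))" "t (Suc (Suc n)) > 0"
    using theta_main[OF assms, of "Suc n"] by (auto simp: t_def r_def a_def)
  have "cf_rem a (Suc n) = 1 / (r - of_int \<lfloor>r\<rfloor>)" by (simp add: r_def)
  have f0: "r - of_int \<lfloor>r\<rfloor> \<noteq> 0"
  proof -
    have "r \<notin> \<rat>" using cf_rem_props[OF a1] r_def by auto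
    then show ?thesis using Rats_of_int by (metis eq_iff_diff_eq_0)
  qed
  have c: "cf_rem a (Suc n) * (r - of_int \<lfloor>r\<rfloor>) = 1"
    using f0 \<open>cf_rem a (Suc n) = 1 / (r - of_int \<lfloor>r\<rfloor>)\<close> by simp
  have "t (Suc n) * (r - of_int \<lfloor>r\<rfloor>) = t (Suc (Suc n)) * (cf_rem a (Suc n) * (r - of_int \<lfloor>r\<rfloor>))"
    unfolding h1(1) by (simp only: ac_simps)
  then have "t (Suc (Suc n)) = t (Suc n) * (r - of_int \<lfloor>r\<rfloor>)" using c by simp
  also have "\<dots> = t n - real (cf_q a n) * t (Suc n)" using h0 qr by (simp add: algebra_simps)
  finally show ?thesis by (simp add: t_def a_def)
qed

lemma theta_inv:
  assumes "u0 > u1" "u1 > (0::real)" "alpha u0 u1 \<notin> \<rat>"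
    and X: "\<And>j. X (Suc (Suc j)) = real (cf_q (alpha u0 u1) j) * X (Suc j) + X j"
  shows "X (Suc k) * arctan (useq u0 u1 k) + X k * arctan (useq u0 u1 (Suc k))
       = X 1 * arctan (useq u0 u1 0) + X 0 * arctan (useq u0 u1 1)"
proof (induction k)
  case 0 then show ?case by simp
next
  case (Suc k)
  have "X (Suc (Suc k)) * arctan (useq u0 u1 (Suc k)) + X (Suc k) * arctan (useq u0 u1 (Suc (Suc k)))
      = X (Suc k) * arctan (useq u0 u1 k) + X k * arctan (useq u0 u1 (Suc k))"
    unfolding X theta_rec[OF assms(1-3)] by (simp add: algebra_simps)
  then show ?case using Suc by simp
qed


theorem mainTheorem9:
  fixes a0 a1 :: int and u0 u1 :: real
  assumes "u0 \<in> \<rat>" and "u1 \<in> \<rat>" and "u0 > u1" and "u1 > 0"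
    and "of_int a0 * arctan u0 + of_int a1 * arctan u1 = pi / 4"
    and "alpha u0 u1 \<notin> \<rat>"
  shows "(\<forall>n. Dseq (alpha u0 u1) (n + 1) \<ge> int (fib n)) \<and>
    (\<lambda>n. real_of_int (aseq a0 a1 u0 u1 (n + 1)) * useq u0 u1 n
         + real_of_int (aseq a0 a1 u0 u1 n) * useq u0 u1 (n + 1) - pi / 4)
      \<in> O(\<lambda>n. 1 / ((1 + sqrt 5) / 2) ^ (2 * n))"
proof -
  note as = assms(3,4,6)
  define a where "a = alpha u0 u1"
  define t where "t = (\<lambda>k. arctan (useq u0 u1 k))"
  define u where "u = useq u0 u1"
  define D where "D = (\<lambda>k. real_of_int (Dseq a k))"
  define E where "E = (\<lambda>k. real_of_int (Eseq a k))"
  define A where "A = (\<lambda>k. real_of_int (aseq a0 a1 u0 u1 k))"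
  have a1: "a \<notin> \<rat>" "a > 1" using as alpha_gt1 a_def by auto
  have q1: "cf_q a k \<ge> 1" for k using cf_q_real(2)[of a k] cf_rem_props[OF a1, of k] by auto
  have tS: "t (Suc k) > 0" "t k = cf_rem a k * t (Suc k)" for k
    using theta_main[OF as, of k] by (auto simp: t_def a_def)
  have tpos: "t k > 0" for k
  proof (cases k)
    case 0 then show ?thesis using tS(2)[of 0] tS(1)[of 0] a1 by simp
  next
    case (Suc m) then show ?thesis using tS(1) by simp
  qed
  have tdec: "t (Suc k) < t k" for k
    using tS[of k] cf_rem_props[OF a1, of k] by simp
  have tle0: "t k \<le> t 0" for k
    by (induction k) (auto intro: order.trans[OF less_imp_le[OF tdec]])
  have inv: "X (Suc k) * t k + X k * t (Suc k) = X 1 * t 0 + X 0 * t 1"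
    if "\<And>j. X (Suc (Suc j)) = real (cf_q a j) * X (Suc j) + X j" for X k
    using theta_inv[OF as, of X k] that by (simp add: t_def a_def)
  have part1: "Dseq a (n+1) \<ge> int (fib n) \<and> Dseq a (n+2) \<ge> int (fib (n+1))" for n
  proof (induction n)
    case 0 then show ?case by (simp add: numeral_2_eq_2)
  next
    case (Suc n)
    have "Dseq a (Suc n + 2) = int (cf_q a (n+1)) * Dseq a (n+2) + Dseq a (n+1)"
      by (simp add: numeral_2_eq_2)
    moreover have "int (cf_q a (n+1)) * Dseq a (n+2) \<ge> Dseq a (n+2)"
      using q1[of "n+1"] Suc by (simp add: mult_le_cancel_right1)
    moreover have "fib (Suc n + 1) = fib (n+1) + fib n"
      using fib_plus_2[of n] by simp
    ultimately show ?case using Suc by simp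
  qed
  have Dnn: "D k \<ge> 0" for k
  proof (cases k)
    case 0 then show ?thesis by (simp add: D_def)
  next
    case (Suc m) then show ?thesis using part1[of m] by (simp add: D_def)
  qed
  have Enn: "E k \<ge> 0 \<and> E (Suc k) \<ge> 0" for k
  proof (induction k)
    case 0 then show ?case by (simp add: E_def)
  next
    case (Suc k) then show ?case by (simp add: E_def)
  qed
  have Aeq: "A k = a1 * D k + a0 * E k \<and> A (Suc k) = a1 * D (Suc k) + a0 * E (Suc k)" for k
  proof (induction k)
    case 0 then show ?case by (simp add: A_def D_def E_def)
  next
    case (Suc k)
    have "A (Suc (Suc k)) = real (cf_q a k) * A (Suc k) + A k" by (simp add: A_def a_def)
    moreover have "D (Suc (Suc k)) = real (cf_q a k) * D (Suc k) + D k" by (simp add: D_def)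
    moreover have "E (Suc (Suc k)) = real (cf_q a k) * E (Suc k) + E k" by (simp add: E_def)
    ultimately show ?case using Suc by (simp add: algebra_simps)
  qed
  have invD: "D (Suc k) * t k + D k * t (Suc k) = t 1" for k
    using inv[of D k] by (simp add: D_def)
  have invE: "E (Suc k) * t k + E k * t (Suc k) = t 0" for k
    using inv[of E k] by (simp add: E_def)
  have invA: "A (Suc k) * t k + A k * t (Suc k) = pi / 4" for k
    using inv[of A k] assms(5) by (simp add: A_def a_def t_def algebra_simps)
  define M where "M = \<bar>a1\<bar> * t 1 + \<bar>a0\<bar> * t 0"
  have Ab: "\<bar>A k\<bar> \<le> \<bar>a1\<bar> * D k + \<bar>a0\<bar> * E k" for k
  proof -
    have "\<bar>A k\<bar> \<le> \<bar>a1 * D k\<bar> + \<bar>a0 * E k\<bar>" using Aeq[of k] by (simp add: abs_triangle_ineq)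
    then show ?thesis using Dnn[of k] Enn[of k] by (simp add: abs_mult)
  qed
  have MB: "\<bar>A (Suc k)\<bar> * t k \<le> M \<and> \<bar>A k\<bar> * t (Suc k) \<le> M" for k
  proof -
    have d1: "D (Suc k) * t k \<le> t 1" "D k * t (Suc k) \<le> t 1"
      using invD[of k] mult_nonneg_nonneg[OF Dnn[of k] less_imp_le[OF tpos[of "Suc k"]]]
        mult_nonneg_nonneg[OF Dnn[of "Suc k"] less_imp_le[OF tpos[of k]]] by linarith+
    have e1: "E (Suc k) * t k \<le> t 0" "E k * t (Suc k) \<le> t 0"
      using invE[of k] mult_nonneg_nonneg[OF conjunct1[OF Enn[of k]] less_imp_le[OF tpos[of "Suc k"]]]
        mult_nonneg_nonneg[OF conjunct2[OF Enn[of k]] less_imp_le[OF tpos[of k]]] by linarith+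
    have "\<bar>A (Suc k)\<bar> * t k \<le> (\<bar>a1\<bar> * D (Suc k) + \<bar>a0\<bar> * E (Suc k)) * t k"
      using Ab[of "Suc k"] tpos[of k] by (simp add: mult_right_mono)
    also have "\<dots> = \<bar>a1\<bar> * (D (Suc k) * t k) + \<bar>a0\<bar> * (E (Suc k) * t k)" by (simp add: algebra_simps)
    also have "\<dots> \<le> M" unfolding M_def using d1 e1
      by (intro add_mono mult_left_mono) auto
    finally have 1: "\<bar>A (Suc k)\<bar> * t k \<le> M" .
    have "\<bar>A k\<bar> * t (Suc k) \<le> (\<bar>a1\<bar> * D k + \<bar>a0\<bar> * E k) * t (Suc k)"
      using Ab[of k] tpos[of "Suc k"] by (simp add: mult_right_mono)
    also have "\<dots> = \<bar>a1\<bar> * (D k * t (Suc k)) + \<bar>a0\<bar> * (E k * t (Suc k))" by (simp add: algebra_simps)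
    also have "\<dots> \<le> M" unfolding M_def using d1 e1
      by (intro add_mono mult_left_mono) auto
    finally show ?thesis using 1 by simp
  qed
  have M0: "M \<ge> 0" unfolding M_def using tpos[of 0] tpos[of 1] by simp
  define K where "K = 1 + u0^2"
  have K0: "K > 0" unfolding K_def using zero_le_power2[of u0] by linarith
  have upos: "u k > 0" for k using tpos[of k] by (simp add: t_def u_def)
  have ule: "u k \<le> u0" for k using tle0[of k] by (simp add: t_def u_def arctan_le_iff)
  have uK: "u k \<le> K * t k" for k
  proof -
    have "u k / (1 + (u k)^2) \<le> t k" using arctan_lb[of "u k"] upos[of k] by (simp add: t_def u_def)
    moreover have "1 + (u k)^2 > 0" using zero_le_power2[of "u k"] by linarith
    ultimately have "u k \<le> (1 + (u k)^2) * t k" by (simp add: pos_divide_le_eq mult.commute)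
    also have "\<dots> \<le> K * t k" unfolding K_def using upos[of k] ule[of k] tpos[of k]
      by (intro mult_right_mono) (auto intro: power_mono)
    finally show ?thesis .
  qed
  have err: "\<bar>u k - t k\<bar> \<le> K^3 * t k ^ 3 / 3" for k
  proof -
    have "t k \<le> u k" using arctan_le_self[of "u k"] upos[of k] by (simp add: t_def u_def)
    moreover have "u k - t k \<le> u k ^ 3 / 3" using arctan_ub3[of "u k"] upos[of k] by (simp add: t_def u_def)
    moreover have "u k ^ 3 \<le> (K * t k) ^ 3" using uK[of k] upos[of k] by (intro power_mono) auto
    ultimately show ?thesis by (simp add: power_mult_distrib)
  qed
  have mainb: "\<bar>A (Suc k) * u k + A k * u (Suc k) - pi / 4\<bar> \<le> 2 / 3 * K^3 * M * t k ^ 2" for k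
  proof -
    have "A (Suc k) * u k + A k * u (Suc k) - pi / 4
        = A (Suc k) * (u k - t k) + A k * (u (Suc k) - t (Suc k))"
      using invA[of k] by (simp add: algebra_simps)
    then have "\<bar>A (Suc k) * u k + A k * u (Suc k) - pi / 4\<bar>
        \<le> \<bar>A (Suc k)\<bar> * \<bar>u k - t k\<bar> + \<bar>A k\<bar> * \<bar>u (Suc k) - t (Suc k)\<bar>"
      by (simp add: abs_mult[symmetric] abs_triangle_ineq)
    also have "\<dots> \<le> \<bar>A (Suc k)\<bar> * (K^3 * t k ^ 3 / 3) + \<bar>A k\<bar> * (K^3 * t (Suc k) ^ 3 / 3)"
      using err[of k] err[of "Suc k"] by (intro add_mono mult_left_mono) auto
    also have "\<dots> = K^3 / 3 * ((\<bar>A (Suc k)\<bar> * t k) * t k ^ 2 + (\<bar>A k\<bar> * t (Suc k)) * t (Suc k) ^ 2)"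
      by (simp add: algebra_simps power3_eq_cube power2_eq_square)
    also have "\<dots> \<le> K^3 / 3 * (M * t k ^ 2 + M * t k ^ 2)"
    proof -
      have "t (Suc k) ^ 2 \<le> t k ^ 2" using tdec[of k] tpos[of "Suc k"] by (intro power_mono) auto
      then have "(\<bar>A k\<bar> * t (Suc k)) * t (Suc k) ^ 2 \<le> M * t k ^ 2"
        using MB[of k] M0 by (intro mult_mono) auto
      moreover have "(\<bar>A (Suc k)\<bar> * t k) * t k ^ 2 \<le> M * t k ^ 2"
        using MB[of k] by (intro mult_right_mono) auto
      ultimately show ?thesis using K0 by (intro mult_left_mono) auto
    qed
    also have "\<dots> = 2 / 3 * K^3 * M * t k ^ 2" by simp
    finally show ?thesis .
  qed
  define p where "p = (1 + sqrt 5) / 2"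
  have p1: "p > 0" unfolding p_def by (simp add: add_pos_nonneg)
  have tb: "t (m+2) ^ 2 \<le> t 1 ^ 2 * p^4 * (1 / p ^ (2 * (m+2)))" for m
  proof -
    have "real (fib (m+2)) \<ge> p ^ m" using fib_phi[of m] by (simp add: p_def)
    moreover have "int (fib (m+2)) \<le> Dseq a (Suc (m+2))"
      using conjunct1[OF part1[of "m+2"]] by (simp only: Suc_eq_plus1)
    then have "real (fib (m+2)) \<le> D (Suc (m+2))" unfolding D_def
      by (metis of_int_le_iff of_int_of_nat_eq)
    ultimately have pD: "p ^ m \<le> D (Suc (m+2))" by linarith
    have "D (Suc (m+2)) * t (m+2) \<le> t 1"
      using invD[of "m+2"] mult_nonneg_nonneg[OF Dnn[of "m+2"] less_imp_le[OF tpos[of "Suc (m+2)"]]]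
      by linarith
    moreover have "p ^ m * t (m+2) \<le> D (Suc (m+2)) * t (m+2)"
      using pD tpos[of "m+2"] by (intro mult_right_mono) auto
    ultimately have "p ^ m * t (m+2) \<le> t 1" by linarith
    then have "(p ^ m * t (m+2)) ^ 2 \<le> t 1 ^ 2"
      using tpos[of "m+2"] p1 by (intro power_mono) auto
    then have "p ^ (2*m) * t (m+2) ^ 2 \<le> t 1 ^ 2" by (simp add: power_mult_distrib power_mult[symmetric] mult.commute)
    then have "t (m+2) ^ 2 \<le> t 1 ^ 2 / p ^ (2*m)" using p1 by (simp add: field_simps)
    also have "\<dots> = t 1 ^ 2 * p^4 * (1 / p ^ (2 * (m+2)))"
      using p1 by (simp add: field_simps power_add power4_eq_xxxx)
    finally show ?thesis .
  qed
  have part2: "(\<lambda>n. A (n + 1) * u n + A n * u (n + 1) - pi / 4) \<in> O(\<lambda>n. 1 / p ^ (2 * n))"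
  proof (rule bigoI[where c = "2 / 3 * K^3 * M * (t 1 ^ 2 * p^4)"])
    show "eventually (\<lambda>n. norm (A (n + 1) * u n + A n * u (n + 1) - pi / 4)
        \<le> 2 / 3 * K^3 * M * (t 1 ^ 2 * p^4) * norm (1 / p ^ (2 * n))) at_top"
      unfolding eventually_at_top_linorder
    proof (intro exI allI impI)
      fix n :: nat assume "n \<ge> 2"
      then obtain m where m: "n = m + 2" by (metis add.commute le_Suc_ex)
      have "norm (A (n + 1) * u n + A n * u (n + 1) - pi / 4) \<le> 2 / 3 * K^3 * M * t n ^ 2"
        using mainb[of n] by simp
      also have "\<dots> \<le> 2 / 3 * K^3 * M * (t 1 ^ 2 * p^4 * (1 / p ^ (2 * n)))"
        using tb[of m] m K0 M0 by (intro mult_left_mono) auto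
      also have "\<dots> = 2 / 3 * K^3 * M * (t 1 ^ 2 * p^4) * norm (1 / p ^ (2 * n))"
        using p1 by simp
      finally show "norm (A (n + 1) * u n + A n * u (n + 1) - pi / 4)
        \<le> 2 / 3 * K^3 * M * (t 1 ^ 2 * p^4) * norm (1 / p ^ (2 * n))" .
    qed
  qed
  show ?thesis using part1 part2 by (simp add: a_def A_def u_def p_def)
qed

end
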